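(* (1) If $\psi(x)\ge c_0\sqrt x$ on $[0,1]$ for some $c_0>0$, then there exists $C\ge1$ (depending on $\psi,\delta_0$) such that for all $\delta\in(0,\delta_0]$ and $(x_N,x_T)\in\mathbb C^2$, \[ \max(|x_N|,|x_T|)\le\kappa_{G_\psi}(p_\delta;(x_N,x_T))\le C\max(|x_N|,|x_T|). \] (2) If $\frac{\psi(x)}{\sqrt x}$ is an increasing function on $(0,1)$ (and $\psi$ is strictly increasing), there exists $c>0$ such that for all $\delta\in(0,\delta_0]$ and all $(x_N,x_T)\in\mathbb C^2$ with $x_N\neq0$ and $|x_T|\le|x_N|$, \[ c\,F_2\!\left(\delta,\left|\frac{x_T}{x_N}\right|\right)|x_N|\le\kappa_{G_\psi}(p_\delta;(x_N,x_T)),\qquad F_2(\delta,t):=\min\left(\frac{\sqrt{\psi^{-1}(\delta)}}{\delta},\ \frac{t}{\psi(t^2)}\right). \]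
   Context: $\mathbb D$ is the unit disc in $\mathbb C$. $\psi:[0,1]\to[0,\infty)$ is continuous with $\psi(0)=0$, $\psi(1)>0$, and $G_\psi:=\{z\in\mathbb D^2:\Re z_1<\psi(|z_2|)\}$. For $\delta\in(0,1)$, $p_\delta:=(-\delta,0)$. Standing assumption: $\delta\in(0,\delta_0]$ for a fixed $\delta_0<1$ with $\delta_0<\psi(1)$, $\psi^{-1}$ the inverse of $\psi$. The Kobayashi–Royden metric of a domain $\Omega\subset\mathbb C^d$ is $\kappa_\Omega(z;X)=\inf\{\lambda^{-1}:\lambda>0,\ \exists\varphi:\mathbb D\to\Omega \text{ holomorphic},\ \varphi(0)=z,\ \varphi'(0)=\lambda X\}$. For $t$ with $t/\psi(t^2)$ undefined because $\psi(t^2)=0$, interpret the quotient as $+\infty$. *)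

theory Defs
  imports "HOL-Analysis.Analysis"
begin

definition G_psi :: "(real \<Rightarrow> real) \<Rightarrow> (complex \<times> complex) set" where
  "G_psi \<psi> = {z. norm (fst z) < 1 \<and> norm (snd z) < 1 \<and> Re (fst z) < \<psi> (norm (snd z))}"

definition p_delta :: "real \<Rightarrow> complex \<times> complex" where
  "p_delta \<delta> = (complex_of_real (- \<delta>), 0)"

definition kobayashi :: "(complex \<times> complex) set \<Rightarrow> complex \<times> complex \<Rightarrow> complex \<times> complex \<Rightarrow> real" where
  "kobayashi \<Omega> z X = Inf {1 / r | r. r > 0 \<and>
     (\<exists>\<phi> :: complex \<Rightarrow> complex \<times> complex.
        (\<lambda>w. fst (\<phi> w)) holomorphic_on ball 0 1 \<and>
        (\<lambda>w. snd (\<phi> w)) holomorphic_on ball 0 1 \<and>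
        \<phi> ` ball 0 1 \<subseteq> \<Omega> \<and> \<phi> 0 = z \<and>
        deriv (\<lambda>w. fst (\<phi> w)) 0 = complex_of_real r * fst X \<and>
        deriv (\<lambda>w. snd (\<phi> w)) 0 = complex_of_real r * snd X)}"

text \<open>F_2(delta,t) = min(sqrt(psi^-1 delta)/delta, t/psi(t^2)), the second term read as +infinity
  when psi(t^2) = 0.  psi^-1 is the inverse of psi on [0,1].\<close>
definition F2 :: "(real \<Rightarrow> real) \<Rightarrow> real \<Rightarrow> real \<Rightarrow> real" where
  "F2 \<psi> \<delta> t = (let a = sqrt (the_inv_into {0..1} \<psi> \<delta>) / \<delta> in
     if \<psi> (t^2) = 0 then a else min a (t / \<psi> (t^2)))"

end

theory Submission imports Defs "HOL-Complex_Analysis.Complex_Analysis" begin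

lemma harnack_deriv:
  fixes f :: "complex \<Rightarrow> complex"
  assumes hol: "f holomorphic_on ball 0 R" and R: "R > 0"
    and bnd: "\<And>z. z \<in> ball 0 R \<Longrightarrow> Re (f z) < M"
  shows "norm (deriv f 0) \<le> 2 * (M - Re (f 0)) / R"
proof -
  define A where "A = M - Re (f 0)"
  have A: "A > 0" using bnd[of 0] R by (simp add: A_def)
  define q where "q z = f (of_real R * z) - f 0" for z
  define h where "h z = q z / (2 * of_real A - q z)" for z
  have inb: "of_real R * z \<in> ball 0 R" if "norm z < 1" for z :: complex
  proof -
    have "norm (of_real R * z) = R * norm z" using R by (simp add: norm_mult)
    also have "\<dots> < R * 1" using that R by (intro mult_strict_left_mono) auto
    finally show ?thesis by simp
  qed
  have req: "Re (q z) < A" if "norm z < 1" for z :: complex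
    using bnd[OF inb[OF that]] by (simp add: q_def A_def)
  have den: "2 * of_real A - q z \<noteq> 0" if "norm z < 1" for z :: complex
  proof
    assume "2 * of_real A - q z = 0"
    then have "Re (2 * of_real A - q z) = 0" by simp
    then show False using req[OF that] A by simp
  qed
  have holq: "q holomorphic_on ball 0 1"
  proof -
    have "(\<lambda>z::complex. of_real R * z) holomorphic_on ball 0 1" by (intro holomorphic_intros)
    moreover have "(\<lambda>z::complex. of_real R * z) ` ball 0 1 \<subseteq> ball 0 R" using inb by (auto simp: dist_0_norm)
    ultimately have "(f \<circ> (\<lambda>z. of_real R * z)) holomorphic_on ball 0 1"
      by (intro holomorphic_on_compose holomorphic_on_subset[OF hol]) auto
    then show ?thesis unfolding q_def o_def by (intro holomorphic_intros)
  qed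
  have holh: "h holomorphic_on ball 0 1"
    unfolding h_def using den holq by (intro holomorphic_intros) auto
  have h0: "h 0 = 0" by (simp add: h_def q_def)
  have hlt: "norm (h z) < 1" if "norm z < 1" for z :: complex
  proof -
    have e1: "(norm (q z))^2 = Re (q z)^2 + Im (q z)^2" by (simp add: cmod_power2)
    have e2: "(norm (2 * of_real A - q z))^2 = (2*A - Re (q z))^2 + Im (q z)^2" by (simp add: cmod_power2)
    have "0 < A * (A - Re (q z))" using req[OF that] A by simp
    then have "(norm (q z))^2 < (norm (2 * of_real A - q z))^2"
      unfolding e1 e2 by (simp add: power2_eq_square algebra_simps)
    then have "norm (q z) < norm (2 * of_real A - q z)"
      by (rule power2_less_imp_less) simp
    then show ?thesis using den[OF that] by (simp add: h_def norm_divide divide_less_eq)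
  qed
  have s: "norm (deriv h 0) \<le> 1" using Schwarz_Lemma(2)[OF holh h0 hlt, of 0] by simp
  have df: "(f has_field_derivative deriv f 0) (at 0)"
    using holomorphic_derivI[OF hol] R by simp
  have dq: "(q has_field_derivative of_real R * deriv f 0) (at 0)"
  proof -
    have "((\<lambda>z. f (of_real R * z)) has_field_derivative deriv f (of_real R * 0) * of_real R) (at 0)"
      using df by (intro DERIV_chain2[where f=f]) (auto intro!: derivative_eq_intros)
    then have "((\<lambda>z. f (of_real R * z) - f 0) has_field_derivative deriv f 0 * of_real R - 0) (at 0)"
      by (intro derivative_intros) auto
    then show ?thesis unfolding q_def by (simp add: mult.commute)
  qed
  have q0: "q 0 = 0" by (simp add: q_def)
  have dh: "(h has_field_derivative (of_real R * deriv f 0) / (2 * of_real A)) (at 0)"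
  proof -
    have "((\<lambda>z. q z / (2 * of_real A - q z)) has_field_derivative
        ((of_real R * deriv f 0) * (2 * of_real A - q 0) - q 0 * (0 - of_real R * deriv f 0)) / ((2 * of_real A - q 0) * (2 * of_real A - q 0))) (at 0)"
      using den[of 0] by (intro derivative_intros dq) auto
    then show ?thesis using q0 A unfolding h_def by (simp add: field_simps)
  qed
  have "deriv h 0 = (of_real R * deriv f 0) / (2 * of_real A)" by (rule DERIV_imp_deriv[OF dh])
  with s have "R * norm (deriv f 0) / (2 * A) \<le> 1" using R A by (simp add: norm_mult norm_divide)
  then show ?thesis using R A by (simp add: A_def field_simps)
qed

lemma pick_deriv:
  fixes f :: "complex \<Rightarrow> complex" and d :: real
  assumes hol: "f holomorphic_on ball 0 1"
    and lt: "\<And>z. norm z < 1 \<Longrightarrow> norm (f z) < 1"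
    and f0: "f 0 = of_real (- d)" and d: "0 \<le> d" "d < 1"
  shows "norm (deriv f 0) \<le> 1"
proof -
  define h where "h z = (f z + of_real d) / (1 + of_real d * f z)" for z
  have den: "1 + of_real d * f z \<noteq> 0" if "norm z < 1" for z :: complex
  proof
    assume "1 + of_real d * f z = 0"
    then have "norm (of_real d * f z) = 1"
      by (metis add.inverse_inverse add_eq_0_iff norm_minus_cancel norm_one)
    moreover have "norm (of_real d * f z) < 1"
    proof -
      have "norm (of_real d * f z) = d * norm (f z)" using d by (simp add: norm_mult)
      also have "\<dots> \<le> 1 * norm (f z)" using d by (intro mult_right_mono) auto
      also have "\<dots> < 1" using lt[OF that] by simp
      finally show ?thesis .
    qed
    ultimately show False by simp
  qed
  have dd: "d^2 < 1" using d by (simp add: abs_square_less_1)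
  have holh: "h holomorphic_on ball 0 1"
    unfolding h_def using den hol by (intro holomorphic_intros) auto
  have h0: "h 0 = 0" by (simp add: h_def f0)
  have hlt: "norm (h z) < 1" if "norm z < 1" for z :: complex
  proof -
    define x where "x = Re (f z)"
    define y where "y = Im (f z)"
    have xy: "x^2 + y^2 < 1" using lt[OF that] unfolding x_def y_def
      by (metis cmod_power2 power_less_one_iff norm_ge_zero abs_of_nonneg abs_square_less_1)
    have e1: "(norm (f z + of_real d))^2 = (x + d)^2 + y^2" by (simp add: cmod_power2 x_def y_def)
    have e2: "(norm (1 + of_real d * f z))^2 = (1 + d*x)^2 + (d*y)^2" by (simp add: cmod_power2 x_def y_def)
    have "0 < (1 - d^2) * (1 - x^2 - y^2)" using xy dd by (intro mult_pos_pos) auto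
    then have "(norm (f z + of_real d))^2 < (norm (1 + of_real d * f z))^2"
      unfolding e1 e2 by (simp add: power2_eq_square algebra_simps)
    then have "norm (f z + of_real d) < norm (1 + of_real d * f z)"
      by (rule power2_less_imp_less) simp
    then show ?thesis using den[OF that] by (simp add: h_def norm_divide divide_less_eq)
  qed
  have s: "norm (deriv h 0) \<le> 1" using Schwarz_Lemma(2)[OF holh h0 hlt, of 0] by simp
  have df: "(f has_field_derivative deriv f 0) (at 0)"
    using holomorphic_derivI[OF hol] by simp
  have dh: "(h has_field_derivative deriv f 0 / (1 - of_real d ^ 2)) (at 0)"
  proof -
    have H: "((\<lambda>z. (f z + of_real d) / (1 + of_real d * f z)) has_field_derivative
        ((deriv f 0 + 0) * (1 + of_real d * f 0) - (f 0 + of_real d) * (0 + of_real d * deriv f 0)) / ((1 + of_real d * f 0) * (1 + of_real d * f 0))) (at 0)"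
      using den[of 0] by (intro derivative_intros df DERIV_cmult[OF df]) auto
    have nz: "1 - (of_real d :: complex) ^ 2 \<noteq> 0"
    proof
      assume "1 - (of_real d :: complex) ^ 2 = 0"
      then have "1 - d^2 = 0" by (metis of_real_1 of_real_diff of_real_eq_0_iff of_real_power)
      then show False using dd by simp
    qed
    have E: "((deriv f 0 + 0) * (1 + of_real d * f 0) - (f 0 + of_real d) * (0 + of_real d * deriv f 0)) / ((1 + of_real d * f 0) * (1 + of_real d * f 0))
        = deriv f 0 / (1 - of_real d ^ 2)"
    proof -
      have "((deriv f 0 + 0) * (1 + of_real d * f 0) - (f 0 + of_real d) * (0 + of_real d * deriv f 0)) / ((1 + of_real d * f 0) * (1 + of_real d * f 0))
        = (deriv f 0 * (1 - of_real d ^ 2)) / ((1 - of_real d ^ 2) * (1 - of_real d ^ 2))"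
        by (simp add: f0 power2_eq_square)
      also have "\<dots> = deriv f 0 / (1 - of_real d ^ 2)" using nz by simp
      finally show ?thesis .
    qed
    show ?thesis using H unfolding E h_def .
  qed
  have "deriv h 0 = deriv f 0 / (1 - of_real d ^ 2)" by (rule DERIV_imp_deriv[OF dh])
  moreover have "norm (1 - (of_real d :: complex) ^ 2) = 1 - d^2"
  proof -
    have "(1 - (of_real d :: complex) ^ 2) = of_real (1 - d^2)" by simp
    moreover have "d^2 \<le> 1" using dd by simp
    ultimately show ?thesis by (metis abs_of_nonneg diff_ge_0_iff_ge norm_of_real)
  qed
  ultimately have "norm (deriv f 0) / (1 - d^2) \<le> 1" using s by (simp add: norm_divide)
  moreover note dd
  ultimately have "norm (deriv f 0) \<le> 1 - d^2" by (simp add: divide_le_eq)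
  then show ?thesis by (smt (verit) zero_le_power2)
qed

lemma schwarz_quad:
  fixes g :: "complex \<Rightarrow> complex"
  assumes hol: "g holomorphic_on ball 0 1" and g0: "g 0 = 0"
    and lt: "\<And>z. norm z < 1 \<Longrightarrow> norm (g z) < 1"
    and z: "norm z < 1"
  shows "norm (g z) \<le> norm z * (3 * norm z + norm (deriv g 0))"
proof -
  obtain h where holh: "h holomorphic_on ball 0 1" and eq: "\<And>z. norm z < 1 \<Longrightarrow> g z = z * h z"
    and dh: "deriv g 0 = h 0"
    using Schwarz3[OF hol g0] by blast
  have hle: "norm (h w) \<le> 1" if w: "norm w < 1" for w
  proof (cases "w = 0")
    case True
    then show ?thesis using Schwarz_Lemma(2)[OF hol g0 lt, of 0] dh by simp
  next
    case False
    have "norm (g w) \<le> norm w" using Schwarz_Lemma(1)[OF hol g0 lt w] .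
    then have "norm w * norm (h w) \<le> norm w * 1" using eq[OF w] by (simp add: norm_mult)
    then show ?thesis using False by (simp add: mult_le_cancel_left)
  qed
  define k where "k w = (h w - h 0) / 3" for w
  have holk: "k holomorphic_on ball 0 1" unfolding k_def using holh by (intro holomorphic_intros) auto
  have k0: "k 0 = 0" by (simp add: k_def)
  have klt: "norm (k w) < 1" if "norm w < 1" for w
  proof -
    have "norm (h w - h 0) \<le> norm (h w) + norm (h 0)" by (rule norm_triangle_ineq4)
    also have "\<dots> \<le> 2" using hle[OF that] hle[of 0] by simp
    finally show ?thesis by (simp add: k_def norm_divide)
  qed
  have "norm (k z) \<le> norm z" using Schwarz_Lemma(1)[OF holk k0 klt z] .
  then have "norm (h z - h 0) \<le> 3 * norm z" by (simp add: k_def norm_divide)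
  then have "norm (h z) \<le> 3 * norm z + norm (h 0)" by (metis add.commute diff_le_eq norm_triangle_ineq2 order_trans)
  then show ?thesis using eq[OF z] dh by (simp add: norm_mult mult_left_mono)
qed

definition adm :: "(complex \<times> complex) set \<Rightarrow> complex \<times> complex \<Rightarrow> complex \<times> complex \<Rightarrow> real \<Rightarrow> (complex \<Rightarrow> complex \<times> complex) \<Rightarrow> bool" where
  "adm \<Omega> z X r \<phi> \<longleftrightarrow> (\<lambda>w. fst (\<phi> w)) holomorphic_on ball 0 1 \<and>
        (\<lambda>w. snd (\<phi> w)) holomorphic_on ball 0 1 \<and>
        \<phi> ` ball 0 1 \<subseteq> \<Omega> \<and> \<phi> 0 = z \<and>
        deriv (\<lambda>w. fst (\<phi> w)) 0 = complex_of_real r * fst X \<and>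
        deriv (\<lambda>w. snd (\<phi> w)) 0 = complex_of_real r * snd X"

lemma kob_eq: "kobayashi \<Omega> z X = Inf {1 / r | r. r > 0 \<and> (\<exists>\<phi>. adm \<Omega> z X r \<phi>)}"
  by (simp add: kobayashi_def adm_def)

lemma kob_le: assumes "r > 0" "adm \<Omega> z X r \<phi>" shows "kobayashi \<Omega> z X \<le> 1 / r"
  unfolding kob_eq
proof (rule cInf_lower)
  show "1 / r \<in> {1 / r | r. r > 0 \<and> (\<exists>\<phi>. adm \<Omega> z X r \<phi>)}" using assms by blast
  show "bdd_below {1 / r | r. r > 0 \<and> (\<exists>\<phi>. adm \<Omega> z X r \<phi>)}"
    by (rule bdd_belowI[of _ 0]) auto
qed

lemma kob_ge:
  assumes "\<exists>r \<phi>. r > 0 \<and> adm \<Omega> z X r \<phi>"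
    and "\<And>r \<phi>. r > 0 \<Longrightarrow> adm \<Omega> z X r \<phi> \<Longrightarrow> B \<le> 1 / r"
  shows "B \<le> kobayashi \<Omega> z X"
  unfolding kob_eq
proof (rule cInf_greatest)
  show "{1 / r | r. r > 0 \<and> (\<exists>\<phi>. adm \<Omega> z X r \<phi>)} \<noteq> {}" using assms(1) by blast
  show "\<And>x. x \<in> {1 / r | r. r > 0 \<and> (\<exists>\<phi>. adm \<Omega> z X r \<phi>)} \<Longrightarrow> B \<le> x"
    using assms(2) by blast
qed

lemma adm_facts:
  assumes "adm (G_psi \<psi>) (p_delta \<delta>) X r \<phi>"
  shows "(\<lambda>w. fst (\<phi> w)) holomorphic_on ball 0 1" "(\<lambda>w. snd (\<phi> w)) holomorphic_on ball 0 1"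
    "\<And>w. norm w < 1 \<Longrightarrow> norm (fst (\<phi> w)) < 1"
    "\<And>w. norm w < 1 \<Longrightarrow> norm (snd (\<phi> w)) < 1"
    "\<And>w. norm w < 1 \<Longrightarrow> Re (fst (\<phi> w)) < \<psi> (norm (snd (\<phi> w)))"
    "fst (\<phi> 0) = of_real (- \<delta>)" "snd (\<phi> 0) = 0"
    "deriv (\<lambda>w. fst (\<phi> w)) 0 = complex_of_real r * fst X"
    "deriv (\<lambda>w. snd (\<phi> w)) 0 = complex_of_real r * snd X"
proof -
  have sub: "\<phi> ` ball 0 1 \<subseteq> G_psi \<psi>" using assms by (simp add: adm_def)
  have mem: "\<phi> w \<in> G_psi \<psi>" if "norm w < 1" for w :: complex using sub that by auto
  show "(\<lambda>w. fst (\<phi> w)) holomorphic_on ball 0 1" "(\<lambda>w. snd (\<phi> w)) holomorphic_on ball 0 1"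
    "fst (\<phi> 0) = of_real (- \<delta>)" "snd (\<phi> 0) = 0"
    "deriv (\<lambda>w. fst (\<phi> w)) 0 = complex_of_real r * fst X"
    "deriv (\<lambda>w. snd (\<phi> w)) 0 = complex_of_real r * snd X"
    using assms by (auto simp: adm_def p_delta_def)
  show "\<And>w. norm w < 1 \<Longrightarrow> norm (fst (\<phi> w)) < 1"
    "\<And>w. norm w < 1 \<Longrightarrow> norm (snd (\<phi> w)) < 1"
    "\<And>w. norm w < 1 \<Longrightarrow> Re (fst (\<phi> w)) < \<psi> (norm (snd (\<phi> w)))"
    using mem by (auto simp: G_psi_def)
qed

lemma adm_lower:
  assumes "adm (G_psi \<psi>) (p_delta \<delta>) X r \<phi>" "0 \<le> \<delta>" "\<delta> < 1" "r > 0"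
  shows "r * norm (fst X) \<le> 1" "r * norm (snd X) \<le> 1"
proof -
  note F = adm_facts[OF assms(1)]
  have "norm (deriv (\<lambda>w. fst (\<phi> w)) 0) \<le> 1"
    by (rule pick_deriv[OF F(1) F(3) F(6) assms(2,3)])
  then show "r * norm (fst X) \<le> 1" using F(8) assms(4) by (simp add: norm_mult)
  have "norm (deriv (\<lambda>w. snd (\<phi> w)) 0) \<le> 1"
    using Schwarz_Lemma(2)[OF F(2) F(7) F(4), of 0] by simp
  then show "r * norm (snd X) \<le> 1" using F(9) assms(4) by (simp add: norm_mult)
qed

lemma adm_nonempty:
  assumes "0 < \<delta>" "\<delta> < 1" "\<forall>x\<in>{0..1}. \<psi> x \<ge> 0"
  shows "\<exists>r \<phi>. r > 0 \<and> adm (G_psi \<psi>) (p_delta \<delta>) X r \<phi>"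
proof -
  define a where "a = fst X"
  define b where "b = snd X"
  define m where "m = min \<delta> (1 - \<delta>)"
  have m: "m > 0" "m \<le> \<delta>" "m \<le> 1 - \<delta>" "m \<le> 1/2" using assms unfolding m_def by linarith+
  define r where "r = m / (1 + norm a + norm b)"
  have r: "r > 0" using m by (simp add: r_def add_pos_nonneg)
  have ra: "r * norm a < m" using m unfolding r_def by (simp add: field_simps add_pos_nonneg)
  have rb: "r * norm b < m" using m unfolding r_def by (simp add: field_simps add_pos_nonneg)
  define \<phi> where "\<phi> w = (of_real (- \<delta>) + of_real r * a * w, of_real r * b * w)" for w
  have "adm (G_psi \<psi>) (p_delta \<delta>) X r \<phi>"
    unfolding adm_def
  proof (intro conjI)
    show "(\<lambda>w. fst (\<phi> w)) holomorphic_on ball 0 1" "(\<lambda>w. snd (\<phi> w)) holomorphic_on ball 0 1"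
      unfolding \<phi>_def by (auto intro!: holomorphic_intros)
    show "\<phi> 0 = p_delta \<delta>" by (simp add: \<phi>_def p_delta_def)
    have "((\<lambda>w. fst (\<phi> w)) has_field_derivative of_real r * a) (at 0)"
      unfolding \<phi>_def by (auto intro!: derivative_eq_intros)
    then show "deriv (\<lambda>w. fst (\<phi> w)) 0 = of_real r * fst X" by (simp add: DERIV_imp_deriv a_def)
    have "((\<lambda>w. snd (\<phi> w)) has_field_derivative of_real r * b) (at 0)"
      unfolding \<phi>_def by (auto intro!: derivative_eq_intros)
    then show "deriv (\<lambda>w. snd (\<phi> w)) 0 = of_real r * snd X" by (simp add: DERIV_imp_deriv b_def)
    show "\<phi> ` ball 0 1 \<subseteq> G_psi \<psi>"
    proof
      fix z assume "z \<in> \<phi> ` ball 0 1"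
      then obtain w where w: "norm w < 1" and z: "z = \<phi> w" by auto
      have nA: "norm (of_real r * a * w) \<le> r * norm a"
        using w r by (simp add: norm_mult mult_left_le_one_le mult_le_cancel_left1 mult_left_le)
      have nB: "norm (of_real r * b * w) \<le> r * norm b"
        using w r by (simp add: norm_mult mult_left_le)
      have "norm (of_real (- \<delta>) + of_real r * a * w) \<le> \<delta> + r * norm a"
        using nA assms by (smt (verit) norm_of_real norm_triangle_ineq)
      then have f1: "norm (fst z) < 1" using ra m z by (simp add: \<phi>_def)
      have g1: "norm (snd z) < 1" using nB rb m z by (simp add: \<phi>_def)
      have "Re (of_real r * a * w) \<le> r * norm a" using nA complex_Re_le_cmod order_trans by blast
      then have "Re (fst z) < 0" using ra m z by (simp add: \<phi>_def)
      moreover have "0 \<le> \<psi> (norm (snd z))" using assms(3) g1 by simp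
      ultimately show "z \<in> G_psi \<psi>" using f1 g1 by (simp add: G_psi_def)
    qed
  qed
  then show ?thesis using r by blast
qed

lemma key_ineq:
  fixes \<alpha> \<beta> w :: complex and \<rho> c0 :: real
  assumes a: "norm \<alpha> \<le> \<rho>" and c: "\<rho> \<le> c0 / 2" and u: "norm u = 1"
    and uab: "cnj u * (\<alpha> * \<beta>) = of_real (norm (\<alpha> * \<beta>))"
  shows "Re (\<alpha> * w) \<le> c0 * sqrt (norm (\<beta> * w + u * w^2 / 2))"
proof -
  define w0 where "w0 = - 2 * \<beta> * cnj u"
  have uu: "u * cnj u = 1" using u by (metis complex_norm_square mult.commute norm_one power_one of_real_1)
  have geq: "\<beta> * w + u * w^2 / 2 = u / 2 * w * (w - w0)"
    unfolding w0_def
  proof -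
    have "u / 2 * w * (w - - 2 * \<beta> * cnj u) = u * w^2/2 + \<beta> * w * (u * cnj u)"
      by (simp add: algebra_simps power2_eq_square)
    then show "\<beta> * w + u * w^2 / 2 = u / 2 * w * (w - - 2 * \<beta> * cnj u)" using uu by simp
  qed
  have gn: "norm (\<beta> * w + u * w^2 / 2) = norm w * norm (w - w0) / 2"
    unfolding geq using u by (simp add: norm_mult norm_divide)
  have rew0: "Re (\<alpha> * w0) = - norm \<alpha> * norm w0"
  proof -
    have "\<alpha> * w0 = - 2 * (cnj u * (\<alpha> * \<beta>))" by (simp add: w0_def algebra_simps)
    then have "Re (\<alpha> * w0) = - 2 * norm (\<alpha> * \<beta>)" using uab by simp
    moreover have "norm w0 = 2 * norm \<beta>" using u by (simp add: w0_def norm_mult)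
    ultimately show ?thesis by (simp add: norm_mult)
  qed
  have c0: "c0 \<ge> 0" using a c norm_ge_zero[of \<alpha>] by linarith
  show ?thesis
  proof (cases "norm (w - w0) \<le> norm w0")
    case True
    have "Re (\<alpha> * w) = Re (\<alpha> * w0) + Re (\<alpha> * (w - w0))" by (simp add: algebra_simps)
    also have "\<dots> \<le> - norm \<alpha> * norm w0 + norm \<alpha> * norm (w - w0)"
      using rew0 complex_Re_le_cmod[of "\<alpha> * (w - w0)"] by (simp add: norm_mult)
    also have "\<dots> \<le> 0" using True by (simp add: mult_left_mono)
    also have "\<dots> \<le> c0 * sqrt (norm (\<beta> * w + u * w^2 / 2))" using c0 by simp
    finally show ?thesis .
  next
    case False
    have "norm w \<le> norm (w - w0) + norm w0" by (metis norm_triangle_sub add.commute)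
    then have "norm w \<le> 2 * norm (w - w0)" using False by simp
    then have "norm w * norm w \<le> norm w * (2 * norm (w - w0))" by (simp add: mult_left_mono)
    then have "(norm w / 2)^2 \<le> norm (\<beta> * w + u * w^2 / 2)" unfolding gn by (simp add: power2_eq_square field_simps)
    then have s: "norm w / 2 \<le> sqrt (norm (\<beta> * w + u * w^2 / 2))" by (rule real_le_rsqrt)
    have "Re (\<alpha> * w) \<le> norm \<alpha> * norm w" using complex_Re_le_cmod[of "\<alpha> * w"] by (simp add: norm_mult)
    also have "\<dots> \<le> (c0 / 2) * norm w" using a c by (intro mult_right_mono) auto
    also have "\<dots> = c0 * (norm w / 2)" by simp
    also have "\<dots> \<le> c0 * sqrt (norm (\<beta> * w + u * w^2 / 2))" using s c0 by (intro mult_left_mono) auto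
    finally show ?thesis .
  qed
qed

lemma part1_disc:
  fixes \<psi> :: "real \<Rightarrow> real"
  assumes c0: "\<forall>x\<in>{0..1}. \<psi> x \<ge> c0 * sqrt x"
    and d: "0 < \<delta>" "\<delta> \<le> \<delta>0" "\<delta>0 < 1"
    and \<rho>: "\<rho> > 0" "\<rho> \<le> c0 / 2" "\<rho> \<le> (1 - \<delta>0) / 2"
    and M: "M = max (norm (fst X)) (norm (snd X))" "M > 0"
  shows "\<exists>\<phi>. adm (G_psi \<psi>) (p_delta \<delta>) X (\<rho> / M) \<phi>"
proof -
  define r where "r = \<rho> / M"
  define \<alpha> where "\<alpha> = of_real r * fst X"
  define \<beta> where "\<beta> = of_real r * snd X"
  have r: "r > 0" using \<rho> M by (simp add: r_def)
  have na: "norm \<alpha> \<le> \<rho>"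
  proof -
    have "norm \<alpha> = r * norm (fst X)" using r by (simp add: \<alpha>_def norm_mult)
    also have "\<dots> \<le> r * M" using M r by (intro mult_left_mono) auto
    finally show ?thesis using M by (simp add: r_def)
  qed
  have nb: "norm \<beta> \<le> \<rho>"
  proof -
    have "norm \<beta> = r * norm (snd X)" using r by (simp add: \<beta>_def norm_mult)
    also have "\<dots> \<le> r * M" using M r by (intro mult_left_mono) auto
    finally show ?thesis using M by (simp add: r_def)
  qed
  define u where "u = (if \<alpha> * \<beta> = 0 then 1 else (\<alpha> * \<beta>) / of_real (norm (\<alpha> * \<beta>)))"
  have u1: "norm u = 1" by (simp add: u_def norm_divide)
  have uab: "cnj u * (\<alpha> * \<beta>) = of_real (norm (\<alpha> * \<beta>))"
  proof (cases "\<alpha> * \<beta> = 0")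
    case True then show ?thesis by (auto simp: u_def)
  next
    case False
    have "cnj u * (\<alpha> * \<beta>) = cnj (\<alpha> * \<beta>) * (\<alpha> * \<beta>) / of_real (norm (\<alpha> * \<beta>))"
      using False by (simp add: u_def)
    also have "\<dots> = of_real ((norm (\<alpha> * \<beta>))^2) / of_real (norm (\<alpha> * \<beta>))"
      by (metis complex_norm_square mult.commute)
    also have "\<dots> = of_real (norm (\<alpha> * \<beta>))" using False by (simp add: power2_eq_square)
    finally show ?thesis .
  qed
  define \<phi> where "\<phi> w = (of_real (- \<delta>) + \<alpha> * w, \<beta> * w + u * w^2 / 2)" for w
  have "adm (G_psi \<psi>) (p_delta \<delta>) X r \<phi>"
    unfolding adm_def
  proof (intro conjI)
    show "(\<lambda>w. fst (\<phi> w)) holomorphic_on ball 0 1" "(\<lambda>w. snd (\<phi> w)) holomorphic_on ball 0 1"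
      unfolding \<phi>_def by (auto intro!: holomorphic_intros)
    show "\<phi> 0 = p_delta \<delta>" by (simp add: \<phi>_def p_delta_def)
    have "((\<lambda>w. fst (\<phi> w)) has_field_derivative \<alpha>) (at 0)"
      unfolding \<phi>_def by (auto intro!: derivative_eq_intros)
    then show "deriv (\<lambda>w. fst (\<phi> w)) 0 = of_real r * fst X" by (simp add: DERIV_imp_deriv \<alpha>_def)
    have "((\<lambda>w. snd (\<phi> w)) has_field_derivative \<beta> * 1 + u * (2 * 0 ^ 1 * 1) / 2) (at 0)"
      unfolding \<phi>_def by (auto intro!: derivative_eq_intros)
    then show "deriv (\<lambda>w. snd (\<phi> w)) 0 = of_real r * snd X" by (simp add: DERIV_imp_deriv \<beta>_def)
    show "\<phi> ` ball 0 1 \<subseteq> G_psi \<psi>"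
    proof
      fix z assume "z \<in> \<phi> ` ball 0 1"
      then obtain w where w: "norm w < 1" and z: "z = \<phi> w" by auto
      have nA: "norm (\<alpha> * w) \<le> \<rho>"
        using w na by (simp add: norm_mult) (metis mult_le_one norm_ge_zero less_imp_le mult.commute mult_left_le order_trans)
      have nB: "norm (\<beta> * w) \<le> \<rho>"
        using w nb by (simp add: norm_mult) (metis mult_le_one norm_ge_zero less_imp_le mult.commute mult_left_le order_trans)
      have nw2: "norm (u * w^2 / 2) < 1/2"
      proof -
        have "norm (u * w^2 / 2) = norm w ^ 2 / 2" using u1 by (simp add: norm_mult norm_divide norm_power)
        moreover have "norm w ^ 2 < 1" using w by (simp add: power_less_one_iff abs_square_less_1)
        ultimately show ?thesis by simp
      qed
      have "norm (of_real (- \<delta>) + \<alpha> * w) \<le> \<delta> + \<rho>"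
        using nA d by (smt (verit) norm_of_real norm_triangle_ineq)
      then have f1: "norm (fst z) < 1" using \<rho> d z by (simp add: \<phi>_def)
      have rh: "\<rho> < 1/2" using \<rho>(3) d(1,2) by (auto simp: field_simps)
      have "norm (\<beta> * w + u * w^2 / 2) \<le> norm (\<beta> * w) + norm (u * w^2 / 2)" by (rule norm_triangle_ineq)
      also have "\<dots> < \<rho> + 1/2" using nB nw2 by linarith
      also have "\<dots> < 1" using rh by linarith
      finally have "norm (\<beta> * w + u * w^2 / 2) < 1" .
      then have g1: "norm (snd z) < 1" using z by (simp add: \<phi>_def)
      have k: "Re (\<alpha> * w) \<le> c0 * sqrt (norm (\<beta> * w + u * w^2 / 2))"
        by (rule key_ineq[OF na \<rho>(2) u1 uab])
      have "c0 * sqrt (norm (snd z)) \<le> \<psi> (norm (snd z))" using c0 g1 by simp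
      then have "Re (fst z) < \<psi> (norm (snd z))" using k d z by (simp add: \<phi>_def)
      then show "z \<in> G_psi \<psi>" using f1 g1 by (simp add: G_psi_def)
    qed
  qed
  then show ?thesis unfolding r_def by blast
qed

lemma part2_bound:
  fixes \<psi> :: "real \<Rightarrow> real"
  assumes adm: "adm (G_psi \<psi>) (p_delta \<delta>) X r \<phi>" and r: "r > 0"
    and d: "0 < \<delta>" "\<delta> < 1"
    and sm: "strict_mono_on {0..1} \<psi>" and psi0: "\<psi> 0 = 0"
    and y: "y = the_inv_into {0..1} \<psi> \<delta>" "0 < y" "y < 1" "\<psi> y = \<delta>"
    and X: "fst X \<noteq> 0" "norm (snd X) \<le> norm (fst X)"
  shows "1/16 * F2 \<psi> \<delta> (norm (snd X / fst X)) * norm (fst X) \<le> 1 / r"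
proof -
  define f where "f w = fst (\<phi> w)" for w
  define g where "g w = snd (\<phi> w)" for w
  define a where "a = fst X"
  define b where "b = snd X"
  define t where "t = norm (snd X / fst X)"
  note F = adm_facts[OF adm, folded f_def g_def]
  have a0: "norm a > 0" using X by (simp add: a_def)
  have t: "t = norm b / norm a" by (simp add: t_def a_def b_def norm_divide)
  have t01: "0 \<le> t" "t \<le> 1" using X a0 by (auto simp: t a_def b_def divide_le_eq)
  have m1: "r * norm a \<le> 1" using adm_lower(1)[OF adm _ d(2) r] d by (simp add: a_def)
  have dg: "norm (deriv g 0) = t * (r * norm a)" using F(9) r a0 by (simp add: norm_mult t b_def)
  have dg1: "norm (deriv g 0) \<le> t" using dg t01 m1 by (simp add: mult_left_le)
  have quad: "norm (g w) \<le> norm w * (3 * norm w + t)" if "norm w < 1" for w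
  proof -
    have "norm (g w) \<le> norm w * (3 * norm w + norm (deriv g 0))"
      by (rule schwarz_quad[OF F(2) F(7) F(4) that])
    also have "\<dots> \<le> norm w * (3 * norm w + t)" using dg1 by (intro mult_left_mono) auto
    finally show ?thesis .
  qed
  have df: "norm (deriv f 0) = r * norm a" using F(8) r by (simp add: norm_mult a_def)
  have mono: "\<psi> u \<le> \<psi> v" if "0 \<le> u" "u \<le> v" "v \<le> 1" for u v
    using strict_mono_on_leD[OF sm] that by auto
  have harn: "r * norm a \<le> 2 * (M + \<delta>) / R"
    if R: "0 < R" "R \<le> 1" and B: "\<And>z. norm z < R \<Longrightarrow> Re (f z) < M" for R M
  proof -
    have "ball 0 R \<subseteq> ball (0::complex) 1" using R by (simp add: subset_ball)
    then have "f holomorphic_on ball 0 R" using adm_facts(1)[OF adm] unfolding f_def by (metis holomorphic_on_subset)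
    from harnack_deriv[OF this R(1), of M] B
    have "norm (deriv f 0) \<le> 2 * (M - Re (f 0)) / R" by auto
    then show ?thesis using F(6) df by simp
  qed
  have Fdef: "F2 \<psi> \<delta> t = (if \<psi> (t^2) = 0 then sqrt y / \<delta> else min (sqrt y / \<delta>) (t / \<psi> (t^2)))"
    by (simp add: F2_def Let_def y(1))
  have sy: "0 < sqrt y" using y by simp
  show ?thesis
  proof (cases "t \<le> sqrt y")
    case True
    define R where "R = sqrt y / 4"
    have R: "0 < R" "R \<le> 1" proof -
      have s1: "sqrt y \<le> 1" using y by simp
      show "0 < R" "R \<le> 1" using sy s1 unfolding R_def by linarith+
    qed
    have "Re (f z) < \<delta>" if z: "norm z < R" for z
    proof -
      have z1: "norm z < 1" using z R by linarith
      have "norm (g z) \<le> norm z * (3 * norm z + t)" by (rule quad[OF z1])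
      also have "\<dots> \<le> R * (3 * R + t)" using z True R t01 by (intro mult_mono add_mono) auto
      also have "\<dots> \<le> R * (3 * R + sqrt y)" using True R by (intro mult_left_mono) auto
      also have "\<dots> = 7/16 * (sqrt y)^2" by (simp add: R_def power2_eq_square field_simps)
      also have "\<dots> \<le> y" using y by simp
      finally have gy: "norm (g z) \<le> y" .
      have "Re (f z) < \<psi> (norm (g z))" by (rule F(5)[OF z1])
      also have "\<dots> \<le> \<psi> y" using gy y by (intro mono) auto
      finally show ?thesis using y by simp
    qed
    from harn[OF R this] have "r * norm a \<le> 16 * \<delta> / sqrt y" by (simp add: R_def)
    then have "r * norm a * sqrt y \<le> 16 * \<delta>" using sy by (simp add: field_simps)
    moreover have "F2 \<psi> \<delta> t \<le> sqrt y / \<delta>" by (simp add: Fdef)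
    moreover have "0 \<le> norm a * r" using a0 r by simp
    ultimately have "1/16 * F2 \<psi> \<delta> t * (norm a * r) \<le> 1/16 * (sqrt y / \<delta>) * (norm a * r)"
      by (intro mult_right_mono) auto
    also have "\<dots> = (r * norm a * sqrt y) / (16 * \<delta>)" by (simp add: field_simps)
    also have "\<dots> \<le> 1" using \<open>r * norm a * sqrt y \<le> 16 * \<delta>\<close> d by (simp add: divide_le_eq)
    finally have "1/16 * F2 \<psi> \<delta> t * norm a * r \<le> 1" by (simp add: mult.assoc)
    then show ?thesis using r by (simp add: t_def a_def field_simps)
  next
    case False
    define R where "R = t / 4"
    have tp: "t > 0" using False sy by linarith
    have R: "0 < R" "R \<le> 1" using tp t01 by (auto simp: R_def)
    have t2: "t^2 \<le> 1" "0 \<le> t^2" using t01 by (auto simp: power_le_one)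
    have yt: "y \<le> t^2" using False sy y by (metis less_imp_le not_le real_sqrt_le_iff real_sqrt_pow2 power_mono)
    have "Re (f z) < \<psi> (t^2)" if z: "norm z < R" for z
    proof -
      have z1: "norm z < 1" using z R by linarith
      have "norm (g z) \<le> norm z * (3 * norm z + t)" by (rule quad[OF z1])
      also have "\<dots> \<le> R * (3 * R + t)" using z tp R t01 by (intro mult_mono add_mono) auto
      also have "\<dots> \<le> t^2" using tp unfolding R_def by (simp add: power2_eq_square field_simps)
      finally have gy: "norm (g z) \<le> t^2" .
      have "Re (f z) < \<psi> (norm (g z))" by (rule F(5)[OF z1])
      also have "\<dots> \<le> \<psi> (t^2)" using gy t2 by (intro mono) auto
      finally show ?thesis .
    qed
    from harn[OF R this] have h1: "r * norm a \<le> 8 * (\<psi> (t^2) + \<delta>) / t" by (simp add: R_def)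
    have dle: "\<delta> \<le> \<psi> (t^2)" using mono[of y "t^2"] y yt t2 by simp
    have pp: "\<psi> (t^2) > 0" using strict_mono_onD[OF sm, of 0 "t^2"] psi0 tp t2 by simp
    have "8 * (\<psi> (t^2) + \<delta>) / t \<le> 16 * \<psi> (t^2) / t" using dle tp by (intro divide_right_mono) auto
    with h1 have "r * norm a \<le> 16 * \<psi> (t^2) / t" by linarith
    then have "r * norm a * t \<le> 16 * \<psi> (t^2)" using tp by (simp add: field_simps)
    moreover have "F2 \<psi> \<delta> t \<le> t / \<psi> (t^2)" using pp by (simp add: Fdef)
    moreover have "0 \<le> norm a * r" using a0 r by simp
    ultimately have "1/16 * F2 \<psi> \<delta> t * (norm a * r) \<le> 1/16 * (t / \<psi> (t^2)) * (norm a * r)"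
      by (intro mult_right_mono) auto
    also have "\<dots> = (r * norm a * t) / (16 * \<psi> (t^2))" by (simp add: field_simps)
    also have "\<dots> \<le> 1" using \<open>r * norm a * t \<le> 16 * \<psi> (t^2)\<close> pp by (simp add: divide_le_eq)
    finally have "1/16 * F2 \<psi> \<delta> t * norm a * r \<le> 1" by (simp add: mult.assoc)
    then show ?thesis using r by (simp add: t_def a_def field_simps)
  qed
qed

theorem proposition3:
  fixes \<psi> :: "real \<Rightarrow> real" and \<delta>\<^sub>0 :: real
  assumes cont: "continuous_on {0..1} \<psi>"
    and nonneg: "\<forall>x\<in>{0..1}. \<psi> x \<ge> 0"
    and psi0: "\<psi> 0 = 0" and psi1: "\<psi> 1 > 0"
    and d0: "0 < \<delta>\<^sub>0" "\<delta>\<^sub>0 < 1" "\<delta>\<^sub>0 < \<psi> 1"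
  shows
    "((\<exists>c\<^sub>0 > 0. \<forall>x\<in>{0..1}. \<psi> x \<ge> c\<^sub>0 * sqrt x) \<longrightarrow>
       (\<exists>C \<ge> 1. \<forall>\<delta>\<in>{0<..\<delta>\<^sub>0}. \<forall>X :: complex \<times> complex.
          max (norm (fst X)) (norm (snd X)) \<le> kobayashi (G_psi \<psi>) (p_delta \<delta>) X \<and>
          kobayashi (G_psi \<psi>) (p_delta \<delta>) X \<le> C * max (norm (fst X)) (norm (snd X))))
     \<and>
     ((mono_on {0<..<1} (\<lambda>x. \<psi> x / sqrt x) \<and> strict_mono_on {0..1} \<psi>) \<longrightarrow>
       (\<exists>c > 0. \<forall>\<delta>\<in>{0<..\<delta>\<^sub>0}. \<forall>X :: complex \<times> complex.
          fst X \<noteq> 0 \<and> norm (snd X) \<le> norm (fst X) \<longrightarrow>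
          c * F2 \<psi> \<delta> (norm (snd X / fst X)) * norm (fst X)
            \<le> kobayashi (G_psi \<psi>) (p_delta \<delta>) X))"
proof (intro conjI impI)
  assume "\<exists>c\<^sub>0 > 0. \<forall>x\<in>{0..1}. \<psi> x \<ge> c\<^sub>0 * sqrt x"
  then obtain c0 where c0: "c0 > 0" "\<forall>x\<in>{0..1}. \<psi> x \<ge> c0 * sqrt x" by blast
  define \<rho> where "\<rho> = min (c0/2) ((1 - \<delta>\<^sub>0)/2)"
  have r1: "\<rho> > 0" unfolding \<rho>_def using c0 d0 by simp
  have r2: "\<rho> \<le> c0/2" unfolding \<rho>_def by (rule min.cobounded1)
  have r3: "\<rho> \<le> (1 - \<delta>\<^sub>0)/2" unfolding \<rho>_def by (rule min.cobounded2)
  note \<rho> = r1 r2 r3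
  define C where "C = max 1 (1/\<rho>)"
  show "\<exists>C \<ge> 1. \<forall>\<delta>\<in>{0<..\<delta>\<^sub>0}. \<forall>X :: complex \<times> complex.
          max (norm (fst X)) (norm (snd X)) \<le> kobayashi (G_psi \<psi>) (p_delta \<delta>) X \<and>
          kobayashi (G_psi \<psi>) (p_delta \<delta>) X \<le> C * max (norm (fst X)) (norm (snd X))"
  proof (intro exI[of _ C] conjI ballI allI)
    show "1 \<le> C" by (simp add: C_def)
    fix \<delta> and X :: "complex \<times> complex"
    assume "\<delta> \<in> {0<..\<delta>\<^sub>0}"
    then have d: "0 < \<delta>" "\<delta> \<le> \<delta>\<^sub>0" "\<delta> < 1" using d0 by auto
    define M where "M = max (norm (fst X)) (norm (snd X))"
    show "max (norm (fst X)) (norm (snd X)) \<le> kobayashi (G_psi \<psi>) (p_delta \<delta>) X"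
    proof (rule kob_ge[OF adm_nonempty[OF d(1) d(3) nonneg]])
      fix r \<phi> assume r: "r > 0" and a: "adm (G_psi \<psi>) (p_delta \<delta>) X r \<phi>"
      have "r * norm (fst X) \<le> 1" "r * norm (snd X) \<le> 1" using adm_lower[OF a _ d(3) r] d by auto
      then show "max (norm (fst X)) (norm (snd X)) \<le> 1 / r" using r by (simp add: pos_le_divide_eq mult.commute)
    qed
    show "kobayashi (G_psi \<psi>) (p_delta \<delta>) X \<le> C * max (norm (fst X)) (norm (snd X))"
    proof (cases "M = 0")
      case True
      then have X0: "X = (0, 0)" unfolding M_def by (metis max.idem max_def norm_eq_zero norm_ge_zero prod.collapse order_antisym)
      have adm0: "adm (G_psi \<psi>) (p_delta \<delta>) X r (\<lambda>w. p_delta \<delta>)" for r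
        unfolding adm_def using d psi0 by (auto simp: X0 p_delta_def G_psi_def)
      have kr: "kobayashi (G_psi \<psi>) (p_delta \<delta>) X \<le> 1 / r" if "r > 0" for r
        by (rule kob_le[OF that adm0])
      have "kobayashi (G_psi \<psi>) (p_delta \<delta>) X \<le> 0"
      proof (rule ccontr)
        assume "\<not> ?thesis"
        then have kp: "kobayashi (G_psi \<psi>) (p_delta \<delta>) X > 0" by simp
        from kr[of "2 / kobayashi (G_psi \<psi>) (p_delta \<delta>) X"] kp show False by simp
      qed
      then show ?thesis using True by (simp add: M_def)
    next
      case False
      have "M \<ge> 0" by (simp add: M_def le_max_iff_disj)
      then have Mp: "M > 0" using False by linarith
      obtain \<phi> where a: "adm (G_psi \<psi>) (p_delta \<delta>) X (\<rho> / M) \<phi>"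
        using part1_disc[OF c0(2) d(1) d(2) d0(2) \<rho> M_def Mp] by blast
      have "kobayashi (G_psi \<psi>) (p_delta \<delta>) X \<le> 1 / (\<rho> / M)"
        by (rule kob_le[OF _ a]) (use \<rho> Mp in simp)
      also have "\<dots> = (1 / \<rho>) * M" by simp
      also have "\<dots> \<le> C * M" using Mp by (intro mult_right_mono) (auto simp: C_def)
      finally show ?thesis by (simp add: M_def)
    qed
  qed
next
  assume "mono_on {0<..<1} (\<lambda>x. \<psi> x / sqrt x) \<and> strict_mono_on {0..1} \<psi>"
  then have sm: "strict_mono_on {0..1} \<psi>" by blast
  have inj: "inj_on \<psi> {0..1}" by (rule strict_mono_on_imp_inj_on[OF sm])
  show "\<exists>c > 0. \<forall>\<delta>\<in>{0<..\<delta>\<^sub>0}. \<forall>X :: complex \<times> complex.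
          fst X \<noteq> 0 \<and> norm (snd X) \<le> norm (fst X) \<longrightarrow>
          c * F2 \<psi> \<delta> (norm (snd X / fst X)) * norm (fst X)
            \<le> kobayashi (G_psi \<psi>) (p_delta \<delta>) X"
  proof (intro exI[of _ "1/16"] conjI ballI allI impI)
    show "(0::real) < 1/16" by simp
    fix \<delta> and X :: "complex \<times> complex"
    assume "\<delta> \<in> {0<..\<delta>\<^sub>0}"
    then have d: "0 < \<delta>" "\<delta> \<le> \<delta>\<^sub>0" "\<delta> < 1" using d0 by auto
    assume X: "fst X \<noteq> 0 \<and> norm (snd X) \<le> norm (fst X)"
    obtain y0 where y0: "0 \<le> y0" "y0 \<le> 1" "\<psi> y0 = \<delta>"
      using IVT'[of \<psi> 0 \<delta> 1] psi0 d d0 cont by auto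
    define y where "y = the_inv_into {0..1} \<psi> \<delta>"
    have yy: "y = y0" unfolding y_def using the_inv_into_f_f[OF inj, of y0] y0 by auto
    have y: "y = the_inv_into {0..1} \<psi> \<delta>" "0 < y" "y < 1" "\<psi> y = \<delta>"
    proof -
      show "y = the_inv_into {0..1} \<psi> \<delta>" by (rule y_def)
      show "\<psi> y = \<delta>" using yy y0 by simp
      show "0 < y" using yy y0 psi0 d by (metis less_eq_real_def less_irrefl)
      show "y < 1" using yy y0 d d0 by (metis less_eq_real_def less_irrefl order.strict_trans2)
    qed
    show "1/16 * F2 \<psi> \<delta> (norm (snd X / fst X)) * norm (fst X) \<le> kobayashi (G_psi \<psi>) (p_delta \<delta>) X"
    proof (rule kob_ge[OF adm_nonempty[OF d(1) d(3) nonneg]])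
      fix r \<phi> assume r: "r > 0" and a: "adm (G_psi \<psi>) (p_delta \<delta>) X r \<phi>"
      show "1/16 * F2 \<psi> \<delta> (norm (snd X / fst X)) * norm (fst X) \<le> 1 / r"
        by (rule part2_bound[OF a r d(1) d(3) sm psi0 y]) (use X in auto)
    qed
  qed
qed

end
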